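(* In the setting described in the context, suppose that $\mathbb E_N[e^{\gamma X(x)}]\le R_\gamma\epsilon_N^{-\gamma^2/2}$ for all $\gamma>0$, $x\in\Omega$, $N$ (some $R_\gamma>0$ and $\epsilon_N\to0$), and that there exist deterministic constants $\mathrm C,\mathrm c>0$ such that $\mathbb P_N$-almost surely, for any $x\in\Omega$ there is a (possibly random) compact $\mho_x^N\subset\Omega$ with $|\mho_x^N|\ge\mathrm c\,\epsilon_N^d$ and $X(t)\ge X(x)-\mathrm C$ for all $t\in\mho_x^N$ (it is not required that $x\in\mho_x^N$). Then for any $\alpha>\gamma_*$, $\mathbb P_N[\mathscr T_N^\alpha\ne\emptyset]\to0$ as $N\to\infty$. Moreover, if $\varpi_N$ is any increasing sequence with $\varpi_N/\log\epsilon_N^{-1}\to+\infty$, then for any $\gamma>0$ there is $C_\gamma>0$ with \[ \mathbb P_N\big[\sup_\Omega X\ge\varpi_N\big]\le C_\gamma\epsilon_N^{-\gamma^2/2-d}e^{-\gamma\varpi_N}. \]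
   Context: $\Omega\subset\mathbb R^d$ is a bounded, simply connected open set with smooth boundary; $|\cdot|$ is Lebesgue measure; $\gamma_*=\sqrt{2d}$. For each $N$, $\mathbb P_N$ (expectation $\mathbb E_N$) is a probability measure under which the canonical process $X$ is a random function on $\Omega$ that is integrable, bounded above and upper semicontinuous, and which approximates a Gaussian log-correlated field on $\Omega$ (for each $f\in C_c^\infty(\Omega)$ the law of $\int fX$ converges to that of the Gaussian field with covariance $\log|x-y|^{-1}+g(x,y)$, $g$ continuous, bounded above, $L^2$). Thick points: for $\alpha\ge0$, $\mathscr T_N^\alpha=\{x\in\Omega:X(x)\ge\alpha\log\epsilon_N^{-1}\}$. *)

theory Defs
  imports "HOL-Analysis.Analysis" "HOL-Probability.Probability"
begin

fun partial_iter :: "'a::euclidean_space list \<Rightarrow> ('a \<Rightarrow> real) \<Rightarrow> 'a \<Rightarrow> real" where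
  "partial_iter [] f = f"
| "partial_iter (b # bs) f = (\<lambda>x. deriv (\<lambda>t. partial_iter bs f (x + t *\<^sub>R b)) 0)"

definition smooth_on :: "'a::euclidean_space set \<Rightarrow> ('a \<Rightarrow> real) \<Rightarrow> bool" where
  "smooth_on S f \<longleftrightarrow>
     (\<forall>bs \<in> lists Basis. continuous_on S (partial_iter bs f) \<and>
        (\<forall>b \<in> Basis. \<forall>x \<in> S. (\<lambda>t. partial_iter bs f (x + t *\<^sub>R b)) differentiable (at 0)))"

definition test_function :: "'a::euclidean_space set \<Rightarrow> ('a \<Rightarrow> real) \<Rightarrow> bool" where
  "test_function \<Omega> f \<longleftrightarrow> smooth_on UNIV f \<and>
     compact (closure {x. f x \<noteq> 0}) \<and> closure {x. f x \<noteq> 0} \<subseteq> \<Omega>"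

definition smooth_boundary :: "'a::euclidean_space set \<Rightarrow> bool" where
  "smooth_boundary \<Omega> \<longleftrightarrow>
     (\<forall>p \<in> frontier \<Omega>. \<exists>r>0. \<exists>\<phi>. smooth_on UNIV \<phi> \<and>
        (\<exists>b \<in> Basis. partial_iter [b] \<phi> p \<noteq> 0) \<and>
        \<Omega> \<inter> ball p r = {x \<in> ball p r. \<phi> x < 0})"

definition centered_normal :: "real \<Rightarrow> real measure" where
  "centered_normal s2 =
     (if s2 = 0 then return borel 0 else density lborel (normal_density 0 (sqrt s2)))"

(* outer probability (avoids measurability issues for events like "sup X \<ge> a") *)
definition outer_prob :: "'w measure \<Rightarrow> 'w set \<Rightarrow> real" where
  "outer_prob M A = Inf {measure M B | B. B \<in> sets M \<and> A \<subseteq> B}"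

definition thick_points :: "'a set \<Rightarrow> real \<Rightarrow> ('a \<Rightarrow> real) \<Rightarrow> real \<Rightarrow> 'a set" where
  "thick_points \<Omega> \<epsilon> Y \<alpha> = {x \<in> \<Omega>. Y x \<ge> \<alpha> * ln (1 / \<epsilon>)}"

definition usc_on :: "'a::topological_space set \<Rightarrow> ('a \<Rightarrow> real) \<Rightarrow> bool" where
  "usc_on S f \<longleftrightarrow> (\<forall>x \<in> S. \<forall>a. f x < a \<longrightarrow> eventually (\<lambda>y. f y < a) (at x within S))"

end

theory Submission imports Defs begin

lemma key_bound:
  fixes \<Omega> :: "'a::euclidean_space set" and M :: "'w measure" and X :: "'w \<Rightarrow> 'a \<Rightarrow> real"
  assumes P: "prob_space M" and Oo: "open \<Omega>" and Ob: "bounded \<Omega>"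
  and meas: "(\<lambda>(\<omega>, x). X \<omega> x) \<in> borel_measurable (M \<Otimes>\<^sub>M restrict_space lborel \<Omega>)"
  and gam: "\<gamma> > 0" and R: "R \<ge> 0"
  and mom: "\<forall>x\<in>\<Omega>. (\<integral>\<^sup>+ \<omega>. ennreal (exp (\<gamma> * X \<omega> x)) \<partial>M) \<le> ennreal R"
  and m: "m > 0"
  and mho: "AE \<omega> in M. \<forall>x \<in> \<Omega>. \<exists>U. compact U \<and> U \<subseteq> \<Omega> \<and>
        measure lborel U \<ge> m \<and> (\<forall>t \<in> U. X \<omega> t \<ge> X \<omega> x - C)"
  and A: "A \<subseteq> {\<omega> \<in> space M. \<exists>x\<in>\<Omega>. X \<omega> x \<ge> a}"
  shows "outer_prob M A \<le> R * measure lborel \<Omega> / (m * exp (\<gamma> * (a - C)))"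
proof -
  interpret prob_space M by (rule P)
  have Os: "\<Omega> \<in> sets lborel" using Oo by simp
  interpret L: sigma_finite_measure "restrict_space lborel \<Omega>"
    by (rule sigma_finite_measure_restrict_space[OF sigma_finite_lborel Os])
  interpret PS: pair_sigma_finite M "restrict_space lborel \<Omega>"
    by (intro pair_sigma_finite.intro sigma_finite_measure_axioms L.sigma_finite_measure_axioms)
  define f where "f = (\<lambda>p. ennreal (exp (\<gamma> * (case p of (\<omega>, x) \<Rightarrow> X \<omega> x))))"
  have fm: "f \<in> borel_measurable (M \<Otimes>\<^sub>M restrict_space lborel \<Omega>)"
    unfolding f_def using meas by measurable
  define I where "I = (\<lambda>\<omega>. \<integral>\<^sup>+ t. f (\<omega>, t) \<partial>(restrict_space lborel \<Omega>))"
  have Im: "I \<in> borel_measurable M"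
    unfolding I_def by (rule L.borel_measurable_nn_integral_fst[OF fm])
  have sp: "space (restrict_space lborel \<Omega>) = \<Omega>" by (simp add: space_restrict_space)
  have "(\<integral>\<^sup>+ \<omega>. I \<omega> \<partial>M) = (\<integral>\<^sup>+ t. (\<integral>\<^sup>+ \<omega>. f (\<omega>, t) \<partial>M) \<partial>(restrict_space lborel \<Omega>))"
    unfolding I_def by (rule PS.Fubini[OF fm, symmetric])
  also have "\<dots> \<le> (\<integral>\<^sup>+ t. ennreal R \<partial>(restrict_space lborel \<Omega>))"
    by (rule nn_integral_mono) (use mom sp in \<open>auto simp: f_def\<close>)
  also have "\<dots> = ennreal R * emeasure lborel \<Omega>"
    using emeasure_restrict_space[of \<Omega> lborel \<Omega>] Os by (simp add: sp)
  also have "\<dots> = ennreal (R * measure lborel \<Omega>)"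
    using emeasure_bounded_finite[OF Ob] R
    by (simp add: emeasure_eq_ennreal_measure ennreal_mult')
  finally have Ibd: "(\<integral>\<^sup>+ \<omega>. I \<omega> \<partial>M) \<le> ennreal (R * measure lborel \<Omega>)" .
  define T where "T = m * exp (\<gamma> * (a - C))"
  have T: "T > 0" using m by (simp add: T_def)
  obtain N0 where N0: "{\<omega> \<in> space M. \<not> (\<forall>x \<in> \<Omega>. \<exists>U. compact U \<and> U \<subseteq> \<Omega> \<and>
        measure lborel U \<ge> m \<and> (\<forall>t \<in> U. X \<omega> t \<ge> X \<omega> x - C))} \<subseteq> N0"
     "emeasure M N0 = 0" "N0 \<in> sets M"
    using AE_E[OF mho] by blast
  define S where "S = {\<omega> \<in> space M. ennreal T \<le> I \<omega>}"
  have Ss: "S \<in> sets M" unfolding S_def using Im by measurable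
  have AS: "A \<subseteq> S \<union> N0"
  proof
    fix \<omega> assume w: "\<omega> \<in> A"
    then have ws: "\<omega> \<in> space M" and "\<exists>x\<in>\<Omega>. X \<omega> x \<ge> a" using A by auto
    then obtain x where x: "x \<in> \<Omega>" "X \<omega> x \<ge> a" by blast
    show "\<omega> \<in> S \<union> N0"
    proof (cases "\<omega> \<in> N0")
      case False
      then obtain U where U: "compact U" "U \<subseteq> \<Omega>" "measure lborel U \<ge> m"
         "\<forall>t \<in> U. X \<omega> t \<ge> X \<omega> x - C" using N0(1) ws x by blast
      have "ennreal T \<le> ennreal (exp (\<gamma> * (a - C))) * emeasure lborel U"
      proof -
        have "emeasure lborel U = ennreal (measure lborel U)"
          using emeasure_compact_finite[OF U(1)] by (simp add: emeasure_eq_ennreal_measure)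
        moreover have "T \<le> exp (\<gamma> * (a - C)) * measure lborel U"
          unfolding T_def using U(3) by (simp add: mult.commute)
        ultimately show ?thesis by (simp add: ennreal_mult'[symmetric] ennreal_leI)
      qed
      also have "\<dots> = (\<integral>\<^sup>+ t. ennreal (exp (\<gamma> * (a - C))) * indicator U t \<partial>lborel)"
        using U(1) by (simp add: nn_integral_cmult_indicator compact_imp_closed borel_closed)
      also have "\<dots> \<le> (\<integral>\<^sup>+ t. f (\<omega>, t) * indicator \<Omega> t \<partial>lborel)"
      proof (rule nn_integral_mono)
        fix t
        show "ennreal (exp (\<gamma> * (a - C))) * indicator U t \<le> f (\<omega>, t) * indicator \<Omega> t"
        proof (cases "t \<in> U")
          case True
          then have "X \<omega> t \<ge> a - C" using U(4) x(2) by force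
          then have "exp (\<gamma> * (a - C)) \<le> exp (\<gamma> * X \<omega> t)" using gam by simp
          then show ?thesis using True U(2) by (auto simp: f_def indicator_def ennreal_leI)
        qed simp
      qed
      also have "\<dots> = I \<omega>" unfolding I_def by (subst nn_integral_restrict_space) (use Os in auto)
      finally show ?thesis using ws by (simp add: S_def)
    qed simp
  qed
  have "ennreal T * emeasure M S = (\<integral>\<^sup>+ \<omega>. ennreal T * indicator S \<omega> \<partial>M)"
    using Ss by (simp add: nn_integral_cmult_indicator)
  also have "\<dots> \<le> (\<integral>\<^sup>+ \<omega>. I \<omega> \<partial>M)"
    by (rule nn_integral_mono) (auto simp: S_def indicator_def)
  also have "\<dots> \<le> ennreal (R * measure lborel \<Omega>)" by (rule Ibd)
  finally have "ennreal (T * measure M S) \<le> ennreal (R * measure lborel \<Omega>)"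
    using T by (simp add: emeasure_eq_measure ennreal_mult')
  moreover have "R * measure lborel \<Omega> \<ge> 0" using R by simp
  ultimately have "T * measure M S \<le> R * measure lborel \<Omega>"
    by (simp add: ennreal_le_iff)
  then have MS: "measure M S \<le> R * measure lborel \<Omega> / T"
    using T by (simp add: field_simps)
  have "measure M (S \<union> N0) \<le> measure M S + measure M N0"
    by (rule measure_Un_le) (use Ss N0 in auto)
  also have "measure M N0 = 0" using N0 by (simp add: emeasure_eq_measure)
  finally have MSN: "measure M (S \<union> N0) \<le> R * measure lborel \<Omega> / T" using MS by simp
  have "outer_prob M A \<le> measure M (S \<union> N0)"
    unfolding outer_prob_def
    by (rule cInf_lower) (use AS Ss N0(3) in \<open>auto intro!: bdd_belowI[where m=0]\<close>)
  then show ?thesis using MSN by (simp add: T_def)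
qed


theorem proposition3p8:
  fixes \<Omega> :: "'a::euclidean_space set"
    and M :: "nat \<Rightarrow> 'w measure"
    and X :: "nat \<Rightarrow> 'w \<Rightarrow> 'a \<Rightarrow> real"
    and g :: "'a \<Rightarrow> 'a \<Rightarrow> real"
    and \<epsilon> :: "nat \<Rightarrow> real"
  assumes dom: "bounded \<Omega>" "open \<Omega>" "\<Omega> \<noteq> {}" "simply_connected \<Omega>" "smooth_boundary \<Omega>"
    and prob: "\<And>N. prob_space (M N)"
    and meas: "\<And>N. (\<lambda>(\<omega>, x). X N \<omega> x) \<in> borel_measurable (M N \<Otimes>\<^sub>M restrict_space lborel \<Omega>)"
    and integ: "\<And>N \<omega>. \<omega> \<in> space (M N) \<Longrightarrow> set_integrable lborel \<Omega> (X N \<omega>)"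
    and bdd: "\<And>N \<omega>. \<omega> \<in> space (M N) \<Longrightarrow> \<exists>B. \<forall>x \<in> \<Omega>. X N \<omega> x \<le> B"
    and usc: "\<And>N \<omega>. \<omega> \<in> space (M N) \<Longrightarrow> usc_on \<Omega> (X N \<omega>)"
    and g_cont: "continuous_on (\<Omega> \<times> \<Omega>) (\<lambda>(x, y). g x y)"
    and g_bdd: "\<exists>B. \<forall>x \<in> \<Omega>. \<forall>y \<in> \<Omega>. g x y \<le> B"
    and g_L2: "set_integrable (lborel \<Otimes>\<^sub>M lborel) (\<Omega> \<times> \<Omega>) (\<lambda>(x, y). (g x y)\<^sup>2)"
    and approx: "\<And>f. test_function \<Omega> f \<Longrightarrow>
       (let s2 = (\<integral>p \<in> \<Omega> \<times> \<Omega>. f (fst p) * f (snd p) *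
                     (ln (1 / dist (fst p) (snd p)) + g (fst p) (snd p)) \<partial>(lborel \<Otimes>\<^sub>M lborel))
        in s2 \<ge> 0 \<and>
           weak_conv_m (\<lambda>N. distr (M N) borel (\<lambda>\<omega>. \<integral>x \<in> \<Omega>. f x * X N \<omega> x \<partial>lborel))
                       (centered_normal s2))"
    and eps_pos: "\<And>N. \<epsilon> N > 0"
    and eps_lim: "\<epsilon> \<longlonglongrightarrow> 0"
    and moment: "\<And>\<gamma>. \<gamma> > 0 \<Longrightarrow> \<exists>R>0. \<forall>N. \<forall>x \<in> \<Omega>.
        (\<integral>\<^sup>+ \<omega>. ennreal (exp (\<gamma> * X N \<omega> x)) \<partial>M N) \<le> ennreal (R * \<epsilon> N powr (- (\<gamma>\<^sup>2 / 2)))"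
    and mho: "\<exists>C>0. \<exists>c>0. \<forall>N. AE \<omega> in M N. \<forall>x \<in> \<Omega>. \<exists>U. compact U \<and> U \<subseteq> \<Omega> \<and>
        measure lborel U \<ge> c * \<epsilon> N ^ DIM('a) \<and> (\<forall>t \<in> U. X N \<omega> t \<ge> X N \<omega> x - C)"
  shows "(\<forall>\<alpha>. \<alpha> > sqrt (2 * real DIM('a)) \<longrightarrow>
            (\<lambda>N. outer_prob (M N) {\<omega> \<in> space (M N). thick_points \<Omega> (\<epsilon> N) (X N \<omega>) \<alpha> \<noteq> {}})
              \<longlonglongrightarrow> 0)
       \<and> (\<forall>w :: nat \<Rightarrow> real. incseq w \<longrightarrow>
            filterlim (\<lambda>N. w N / ln (1 / \<epsilon> N)) at_top sequentially \<longrightarrow>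
            (\<forall>\<gamma>>0. \<exists>C_g>0. \<forall>N.
               outer_prob (M N) {\<omega> \<in> space (M N). (SUP x \<in> \<Omega>. X N \<omega> x) \<ge> w N}
                 \<le> C_g * \<epsilon> N powr (- (\<gamma>\<^sup>2 / 2) - real DIM('a)) * exp (- \<gamma> * w N)))"
  proof -
  have onn: "\<And>N A. A \<subseteq> space (M N) \<Longrightarrow> 0 \<le> outer_prob (M N) A"
    unfolding outer_prob_def by (rule cInf_greatest) auto
  obtain C c where Cc: "C > 0" "c > 0" "\<And>N. AE \<omega> in M N. \<forall>x \<in> \<Omega>. \<exists>U. compact U \<and> U \<subseteq> \<Omega> \<and>
        measure lborel U \<ge> c * \<epsilon> N ^ DIM('a) \<and> (\<forall>t \<in> U. X N \<omega> t \<ge> X N \<omega> x - C)"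
    using mho by blast
  have gen: "outer_prob (M N) A \<le> R * \<epsilon> N powr (- (\<gamma>\<^sup>2 / 2)) * measure lborel \<Omega> / (c * \<epsilon> N ^ DIM('a) * exp (\<gamma> * (a - C)))"
    if "\<gamma> > 0" "R > 0" "\<forall>N. \<forall>x \<in> \<Omega>.
        (\<integral>\<^sup>+ \<omega>. ennreal (exp (\<gamma> * X N \<omega> x)) \<partial>M N) \<le> ennreal (R * \<epsilon> N powr (- (\<gamma>\<^sup>2 / 2)))"
       "A \<subseteq> {\<omega> \<in> space (M N). \<exists>x\<in>\<Omega>. X N \<omega> x \<ge> a}"
    for \<gamma> R N A a
  proof (rule key_bound[OF prob dom(2) dom(1) meas, where R="R * \<epsilon> N powr (- (\<gamma>\<^sup>2 / 2))" and m="c * \<epsilon> N ^ DIM('a)" and C=C])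
    show "0 < \<gamma>" using that by simp
    show "0 \<le> R * \<epsilon> N powr (- (\<gamma>\<^sup>2 / 2))" using that by simp
    show "\<forall>x\<in>\<Omega>. (\<integral>\<^sup>+ \<omega>. ennreal (exp (\<gamma> * X N \<omega> x)) \<partial>M N) \<le> ennreal (R * \<epsilon> N powr (- (\<gamma>\<^sup>2 / 2)))"
      using that by blast
    show "0 < c * \<epsilon> N ^ DIM('a)" using Cc eps_pos[of N] by simp
    show "AE \<omega> in M N. \<forall>x\<in>\<Omega>. \<exists>U. compact U \<and> U \<subseteq> \<Omega> \<and> c * \<epsilon> N ^ DIM('a) \<le> measure lborel U \<and> (\<forall>t\<in>U. X N \<omega> x - C \<le> X N \<omega> t)"
      by (rule Cc(3))
    show "A \<subseteq> {\<omega> \<in> space (M N). \<exists>x\<in>\<Omega>. a \<le> X N \<omega> x}" using that by simp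
  qed
  have part1: "(\<lambda>N. outer_prob (M N) {\<omega> \<in> space (M N). thick_points \<Omega> (\<epsilon> N) (X N \<omega>) \<alpha> \<noteq> {}})
              \<longlonglongrightarrow> 0" if al: "\<alpha> > sqrt (2 * real DIM('a))" for \<alpha>
  proof -
    have a0: "\<alpha> > 0" proof -
      have "sqrt (2 * real DIM('a)) \<ge> 0" by simp
      then show ?thesis using al by linarith
    qed
    have "\<alpha>\<^sup>2 > 2 * real DIM('a)"
      proof -
      have "(sqrt (2 * real DIM('a)))\<^sup>2 < \<alpha>\<^sup>2"
        by (rule power_strict_mono[OF al]) auto
      then show ?thesis by simp
    qed
    then have p: "\<alpha>\<^sup>2 / 2 - real DIM('a) > 0" by simp
    obtain R where R: "R > 0" "\<forall>N. \<forall>x \<in> \<Omega>.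
        (\<integral>\<^sup>+ \<omega>. ennreal (exp (\<alpha> * X N \<omega> x)) \<partial>M N) \<le> ennreal (R * \<epsilon> N powr (- (\<alpha>\<^sup>2 / 2)))"
      using moment[OF a0] by blast
    define K where "K = R * measure lborel \<Omega> * exp (\<alpha> * C) / c"
    have bnd: "outer_prob (M N) {\<omega> \<in> space (M N). thick_points \<Omega> (\<epsilon> N) (X N \<omega>) \<alpha> \<noteq> {}}
        \<le> K * \<epsilon> N powr (\<alpha>\<^sup>2 / 2 - real DIM('a))" for N
    proof -
      have "outer_prob (M N) {\<omega> \<in> space (M N). thick_points \<Omega> (\<epsilon> N) (X N \<omega>) \<alpha> \<noteq> {}}
        \<le> R * \<epsilon> N powr (- (\<alpha>\<^sup>2 / 2)) * measure lborel \<Omega> / (c * \<epsilon> N ^ DIM('a) * exp (\<alpha> * (\<alpha> * ln (1 / \<epsilon> N) - C)))"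
        by (rule gen[OF a0 R(1) R(2)]) (auto simp: thick_points_def)
      also have "\<dots> = K * \<epsilon> N powr (\<alpha>\<^sup>2 / 2 - real DIM('a))"
      proof -
        have e: "\<epsilon> N > 0" by (rule eps_pos)
        have 1: "\<epsilon> N ^ DIM('a) = exp (real DIM('a) * ln (\<epsilon> N))"
          using e by (simp add: powr_realpow[symmetric] powr_def)
        have 2: "\<And>p. \<epsilon> N powr p = exp (p * ln (\<epsilon> N))" using e by (simp add: powr_def)
        have 3: "ln (1 / \<epsilon> N) = - ln (\<epsilon> N)" using e by (simp add: ln_div)
        show ?thesis unfolding 1 2 3 K_def using Cc(2)
          by (simp add: exp_add[symmetric] exp_diff[symmetric] exp_minus field_simps power2_eq_square)
      qed
      finally show ?thesis .
    qed
    have "(\<lambda>N. \<epsilon> N powr (\<alpha>\<^sup>2 / 2 - real DIM('a))) \<longlonglongrightarrow> 0"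
      by (rule tendsto_zero_powrI[OF eps_lim tendsto_const]) (use eps_pos p in \<open>auto intro!: always_eventually less_imp_le\<close>)
    then have lim: "(\<lambda>N. K * \<epsilon> N powr (\<alpha>\<^sup>2 / 2 - real DIM('a))) \<longlonglongrightarrow> 0"
      using tendsto_mult_right_zero by blast
    show ?thesis
    proof (rule tendsto_sandwich[OF _ _ tendsto_const lim])
      show "\<forall>\<^sub>F N in sequentially. 0 \<le> outer_prob (M N) {\<omega> \<in> space (M N). thick_points \<Omega> (\<epsilon> N) (X N \<omega>) \<alpha> \<noteq> {}}"
        by (intro always_eventually allI onn) auto
      show "\<forall>\<^sub>F N in sequentially. outer_prob (M N) {\<omega> \<in> space (M N). thick_points \<Omega> (\<epsilon> N) (X N \<omega>) \<alpha> \<noteq> {}} \<le> K * \<epsilon> N powr (\<alpha>\<^sup>2 / 2 - real DIM('a))"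
        by (intro always_eventually allI bnd)
    qed
  qed
  have part2: "\<exists>C_g>0. \<forall>N.
               outer_prob (M N) {\<omega> \<in> space (M N). (SUP x \<in> \<Omega>. X N \<omega> x) \<ge> w N}
                 \<le> C_g * \<epsilon> N powr (- (\<gamma>\<^sup>2 / 2) - real DIM('a)) * exp (- \<gamma> * w N)"
    if g0: "\<gamma> > 0" for w :: "nat \<Rightarrow> real" and \<gamma>
  proof -
    obtain R where R: "R > 0" "\<forall>N. \<forall>x \<in> \<Omega>.
        (\<integral>\<^sup>+ \<omega>. ennreal (exp (\<gamma> * X N \<omega> x)) \<partial>M N) \<le> ennreal (R * \<epsilon> N powr (- (\<gamma>\<^sup>2 / 2)))"
      using moment[OF g0] by blast
    define K where "K = R * measure lborel \<Omega> * exp (\<gamma> * (1 + C)) / c"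
    have K0: "K \<ge> 0" unfolding K_def using R Cc by simp
    have "outer_prob (M N) {\<omega> \<in> space (M N). (SUP x \<in> \<Omega>. X N \<omega> x) \<ge> w N}
        \<le> (K + 1) * \<epsilon> N powr (- (\<gamma>\<^sup>2 / 2) - real DIM('a)) * exp (- \<gamma> * w N)" for N
    proof -
      have sub: "{\<omega> \<in> space (M N). (SUP x \<in> \<Omega>. X N \<omega> x) \<ge> w N} \<subseteq> {\<omega> \<in> space (M N). \<exists>x\<in>\<Omega>. X N \<omega> x \<ge> w N - 1}"
      proof safe
        fix \<omega> assume w: "\<omega> \<in> space (M N)" "w N \<le> (SUP x \<in> \<Omega>. X N \<omega> x)"
        obtain B where "\<forall>x \<in> \<Omega>. X N \<omega> x \<le> B" using bdd[OF w(1)] by blast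
        then have "bdd_above (X N \<omega> ` \<Omega>)" by (auto intro: bdd_aboveI2)
        moreover have "w N - 1 < (SUP x \<in> \<Omega>. X N \<omega> x)" using w(2) by linarith
        ultimately obtain x where "x \<in> \<Omega>" "w N - 1 < X N \<omega> x"
          using less_cSUP_iff[OF dom(3)] by blast
        then show "\<exists>x\<in>\<Omega>. w N - 1 \<le> X N \<omega> x" by (auto intro: less_imp_le)
      qed
      have "outer_prob (M N) {\<omega> \<in> space (M N). (SUP x \<in> \<Omega>. X N \<omega> x) \<ge> w N}
        \<le> R * \<epsilon> N powr (- (\<gamma>\<^sup>2 / 2)) * measure lborel \<Omega> / (c * \<epsilon> N ^ DIM('a) * exp (\<gamma> * ((w N - 1) - C)))"
        by (rule gen[OF g0 R(1) R(2) sub])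
      also have "\<dots> = K * \<epsilon> N powr (- (\<gamma>\<^sup>2 / 2) - real DIM('a)) * exp (- \<gamma> * w N)"
      proof -
        have e: "\<epsilon> N > 0" by (rule eps_pos)
        have 1: "\<epsilon> N ^ DIM('a) = exp (real DIM('a) * ln (\<epsilon> N))"
          using e by (simp add: powr_realpow[symmetric] powr_def)
        have 2: "\<And>p. \<epsilon> N powr p = exp (p * ln (\<epsilon> N))" using e by (simp add: powr_def)
        show ?thesis unfolding 1 2 K_def using Cc(2)
          by (simp add: exp_add[symmetric] exp_diff[symmetric] exp_minus field_simps power2_eq_square)
      qed
      also have "\<dots> \<le> (K + 1) * \<epsilon> N powr (- (\<gamma>\<^sup>2 / 2) - real DIM('a)) * exp (- \<gamma> * w N)"
        by (intro mult_right_mono) auto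
      finally show ?thesis .
    qed
    then show ?thesis using K0 by (intro exI[of _ "K + 1"]) auto
  qed
  show ?thesis using part1 part2 by blast
qed

end
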